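(* Let $A\in\mathcal{L}_{PL}'$. If $A$ is $PL$-satisfiable, then $A$ is satisfied by a $PL$-model $M=\langle W,H,\mu,v\rangle$ such that: (1) $|W|\le |A|$; (2) $H=\mathcal{P}(W)$; (3) for every $w\in W$, $\mu(\{w\})$ is a non-negative rational number of size at most $2\cdot\big(|A|\cdot\|A\| + |A|\cdot\log_2(|A|)+1\big)$; (4) for every $a\in\mathrm{cpnb}(A)$ there is at most one $w\in W$ with $v_w(a)=\mathrm{T}$.
   Context: Fix a logic $L$ extending classical propositional logic, given by a set $B(L)$ of basic formulas containing a countable set $\mathrm{Prop}$ of atomic propositions, the language $\mathcal{L}$ generated by $\alpha::=b\mid\neg\alpha\mid\alpha\wedge\alpha$ ($b\in B(L)$), and a class of admissible evaluations $v:B(L)\to\{\mathrm{T},\mathrm{F}\}$, each extended to all of $\mathcal{L}$ by the classical truth tables. The language $\mathcal{L}_{PL}'$ is generated by $A::=P_{\ge s}\alpha\mid\neg A\mid A\wedge A$ with $s\in\mathbb{Q}\cap[0,1]$ and $\alpha\in\mathcal{L}$ (no nesting of $P$); $\mathcal{L}_{PL}=\mathcal{L}_{PL}'\cup\mathcal{L}$. A $PL$-model is $M=\langle W,H,\mu,v\rangle$ where $\langle W,H,\mu\rangle$ is a probability space, $v$ assigns to each $w\in W$ an admissible evaluation $v_w$, and $[\alpha]_M=\{w\in W: v_w(\alpha)=\mathrm{T}\}\in H$ for all $\alpha\in\mathcal{L}$. Truth: $M\models P_{\ge s}\alpha$ iff $\mu([\alpha]_M)\ge s$; $\neg,\wedge$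 classically; for $\alpha\in\mathcal{L}$, $M\models\alpha$ iff $[\alpha]_M=W$. $|A|$ is the number of symbols of $A$, each operator $P_{\ge s}$ counting as one symbol; $\|A\|=\max\{|s|: P_{\ge s}\alpha \text{ is a subformula of } A\}$, where the size of a rational $s=s_1/s_2$ in lowest terms is the number of binary digits of $s_1$ plus that of $s_2$. $\mathrm{cpnb}(A)$ is the set of all conjunctions $\bigwedge_{B}\pm B$, where $B$ ranges over the basic formulas (elements of $B(L)$) that are subformulas of $A$, and $\pm B$ is either $B$ or $\neg B$. *)

theory Defs
  imports "HOL-Probability.Probability"
begin

datatype 'b fml = Basic 'b | Neg "'b fml" | Conj "'b fml" "'b fml"

primrec eval :: "('b \<Rightarrow> bool) \<Rightarrow> 'b fml \<Rightarrow> bool" where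
  "eval v (Basic b) = v b"
| "eval v (Neg a) = (\<not> eval v a)"
| "eval v (Conj a c) = (eval v a \<and> eval v c)"

text \<open>Formulas of L_PL' : P_{>=s} alpha, negation, conjunction (no nesting of P).\<close>

datatype 'b pfml = Pge rat "'b fml" | PNeg "'b pfml" | PConj "'b pfml" "'b pfml"

primrec wf_pfml :: "'b pfml \<Rightarrow> bool" where
  "wf_pfml (Pge s a) = (0 \<le> s \<and> s \<le> 1)"
| "wf_pfml (PNeg A) = wf_pfml A"
| "wf_pfml (PConj A B) = (wf_pfml A \<and> wf_pfml B)"

primrec fsize :: "'b fml \<Rightarrow> nat" where
  "fsize (Basic b) = 1"
| "fsize (Neg a) = 1 + fsize a"
| "fsize (Conj a c) = 1 + fsize a + fsize c"

primrec psize :: "'b pfml \<Rightarrow> nat" where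
  "psize (Pge s a) = 1 + fsize a"
| "psize (PNeg A) = 1 + psize A"
| "psize (PConj A B) = 1 + psize A + psize B"

text \<open>Number of binary digits of a natural number (0 is written with one digit).\<close>
fun bitlen :: "nat \<Rightarrow> nat" where
  "bitlen n = (if n < 2 then 1 else 1 + bitlen (n div 2))"

definition ratsize :: "rat \<Rightarrow> nat" where
  "ratsize r = (case quotient_of r of (a, b) \<Rightarrow> bitlen (nat \<bar>a\<bar>) + bitlen (nat b))"

primrec thresholds :: "'b pfml \<Rightarrow> rat set" where
  "thresholds (Pge s a) = {s}"
| "thresholds (PNeg A) = thresholds A"
| "thresholds (PConj A B) = thresholds A \<union> thresholds B"

definition maxratsize :: "'b pfml \<Rightarrow> nat" where
  "maxratsize A = Max (ratsize ` thresholds A)"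

primrec fbasics :: "'b fml \<Rightarrow> 'b set" where
  "fbasics (Basic b) = {b}"
| "fbasics (Neg a) = fbasics a"
| "fbasics (Conj a c) = fbasics a \<union> fbasics c"

primrec pbasics :: "'b pfml \<Rightarrow> 'b set" where
  "pbasics (Pge s a) = fbasics a"
| "pbasics (PNeg A) = pbasics A"
| "pbasics (PConj A B) = pbasics A \<union> pbasics B"

fun conjs :: "'b fml list \<Rightarrow> 'b fml" where
  "conjs [x] = x"
| "conjs (x # y # xs) = Conj x (conjs (y # xs))"
| "conjs [] = undefined"

definition cpnb :: "'b pfml \<Rightarrow> 'b fml set" where
  "cpnb A = {conjs (map (\<lambda>B. if f B then Basic B else Neg (Basic B)) xs) | f xs.
               distinct xs \<and> set xs = pbasics A}"

text \<open>A PL-model over the admissible evaluations Adm: a probability space M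
  (W = space M, H = sets M, mu = measure M) with v w admissible for every world,
  and every [alpha] measurable.\<close>
definition ext :: "'w measure \<Rightarrow> ('w \<Rightarrow> 'b \<Rightarrow> bool) \<Rightarrow> 'b fml \<Rightarrow> 'w set" where
  "ext M v a = {w \<in> space M. eval (v w) a}"

definition PL_model :: "('b \<Rightarrow> bool) set \<Rightarrow> 'w measure \<Rightarrow> ('w \<Rightarrow> 'b \<Rightarrow> bool) \<Rightarrow> bool" where
  "PL_model Adm M v \<longleftrightarrow> prob_space M \<and> (\<forall>w\<in>space M. v w \<in> Adm)
      \<and> (\<forall>a. ext M v a \<in> sets M)"

primrec psat :: "'w measure \<Rightarrow> ('w \<Rightarrow> 'b \<Rightarrow> bool) \<Rightarrow> 'b pfml \<Rightarrow> bool" where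
  "psat M v (Pge s a) = (measure M (ext M v a) \<ge> real_of_rat s)"
| "psat M v (PNeg A) = (\<not> psat M v A)"
| "psat M v (PConj A B) = (psat M v A \<and> psat M v B)"

end

theory Submission
  imports Defs "Jordan_Normal_Form.DL_Rank"
begin

declare bitlen.simps[simp del]

lemma bitlen_lt2: "n < 2 \<Longrightarrow> bitlen n = 1" by (subst bitlen.simps) simp
lemma bitlen_ge2: "\<not> n < 2 \<Longrightarrow> bitlen n = 1 + bitlen (n div 2)" by (subst bitlen.simps) simp
lemma bitlen_pos: "bitlen n \<ge> 1"
  by (cases "n < 2") (auto simp: bitlen_lt2 bitlen_ge2)
lemma bitlen_mono: "m \<le> n \<Longrightarrow> bitlen m \<le> bitlen n"
proof (induction n arbitrary: m rule: less_induct)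
  case (less n)
  show ?case
  proof (cases "m < 2")
    case True
    then show ?thesis using bitlen_pos[of n] by (simp add: bitlen_lt2)
  next
    case F2: False
    then have F: "\<not> n < 2" using less by simp
    have "bitlen (m div 2) \<le> bitlen (n div 2)"
      using less F by (simp add: div_le_mono)
    then show ?thesis using F F2 by (simp add: bitlen_ge2)
  qed
qed
lemma bitlen_pow: "n \<ge> 1 \<Longrightarrow> 2 ^ (bitlen n - 1) \<le> n"
proof (induction n rule: less_induct)
  case (less n)
  show ?case
  proof (cases "n < 2")
    case True then show ?thesis using less by (simp add: bitlen_lt2)
  next
    case False
    then have h: "2 ^ (bitlen (n div 2) - 1) \<le> n div 2" using less by simp
    have e: "bitlen n - 1 = Suc (bitlen (n div 2) - 1)" using False bitlen_pos[of "n div 2"] by (simp add: bitlen_ge2)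
    have "2 ^ (bitlen n - 1) = 2 * 2 ^ (bitlen (n div 2) - 1)" unfolding e by simp
    also have "\<dots> \<le> n" using h by linarith
    finally show ?thesis .
  qed
qed

lemma bitlen_log: "n \<ge> 1 \<Longrightarrow> real (bitlen n) \<le> log 2 (real n) + 1"
proof -
  assume n: "n \<ge> 1"
  have "real (2 ^ (bitlen n - 1)) \<le> real n" using bitlen_pow[OF n] by linarith
  then have "(2::real) powr real (bitlen n - 1) \<le> real n"
    by (simp add: powr_realpow)
  then have "real (bitlen n - 1) \<le> log 2 (real n)"
    using n by (subst le_log_iff) auto
  then show ?thesis using bitlen_pos[of n] by linarith
qed
lemma ratsize_frac:
  fixes N D :: int
  assumes D: "D > 0" and N: "0 \<le> N" "N \<le> D"
  shows "ratsize (of_int N / of_int D) \<le> 2 * bitlen (nat D)"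
proof -
  define q :: rat where "q = of_int N / of_int D"
  obtain a b where ab: "quotient_of q = (a, b)" by (cases "quotient_of q")
  have b0: "b > 0" using quotient_of_denom_pos[OF ab] .
  have qab: "q = of_int a / of_int b" using quotient_of_div[OF ab] .
  have cop: "coprime a b" using quotient_of_coprime[OF ab] .
  have "of_int a / of_int b = (of_int N / of_int D :: rat)" using qab q_def by simp
  then have "of_int a * of_int D = (of_int N * of_int b :: rat)"
    using b0 D by (simp add: field_simps)
  then have eq: "a * D = N * b" by (metis of_int_eq_iff of_int_mult)
  then have "b dvd a * D" by simp
  then have bD: "b dvd D" using cop by (metis coprime_dvd_mult_right_iff coprime_commute)
  then have "b \<le> D" using D by (simp add: zdvd_imp_le)
  have "0 \<le> q" using q_def N D by simp
  then have a0: "0 \<le> a" using qab b0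
    by (metis of_int_0_le_iff of_int_pos zero_le_divide_iff not_less)
  have "q \<le> 1" using q_def N D by simp
  then have "a \<le> b" using qab b0 by (simp add: divide_le_eq_1)
  have "ratsize q = bitlen (nat \<bar>a\<bar>) + bitlen (nat b)"
    unfolding ratsize_def using ab by simp
  also have "\<dots> \<le> bitlen (nat D) + bitlen (nat D)"
    using \<open>a \<le> b\<close> \<open>b \<le> D\<close> a0 by (intro add_mono bitlen_mono) auto
  finally show ?thesis unfolding q_def by simp
qed




lemma det_Ints:
  fixes A :: "real mat"
  assumes A: "A \<in> carrier_mat n n" and I: "\<And>i j. i < n \<Longrightarrow> j < n \<Longrightarrow> A $$ (i,j) \<in> \<int>"
  shows "Determinant.det A \<in> \<int>"
proof -
  have "(\<Sum>p | p permutes {0..<n}. of_int (sign p) * (\<Prod>i = 0..<n. A $$ (i, p i))) \<in> \<int>"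
  proof (rule Ints_sum)
    fix p assume "p \<in> {p. p permutes {0..<n}}"
    then have p: "p permutes {0..<n}" by simp
    have "(\<Prod>i = 0..<n. A $$ (i, p i)) \<in> \<int>"
    proof (rule Ints_prod)
      fix i assume "i \<in> {0..<n}"
      then have "i < n" "p i < n" using permutes_in_image[OF p] by auto
      then show "A $$ (i, p i) \<in> \<int>" using I by auto
    qed
    then show "of_int (sign p) * (\<Prod>i = 0..<n. A $$ (i, p i)) \<in> \<int>" by (intro Ints_mult) auto
  qed
  then show ?thesis using A unfolding det_def by auto
qed

lemma det_bound:
  fixes A :: "real mat"
  assumes A: "A \<in> carrier_mat n n" and W: "W \<ge> 0"
    and B: "\<And>i j. i < n \<Longrightarrow> j < n \<Longrightarrow> \<bar>A $$ (i,j)\<bar> \<le> W"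
  shows "\<bar>Determinant.det A\<bar> \<le> fact n * W ^ n"
proof -
  let ?P = "{p. p permutes {0..<n}}"
  have "\<bar>Determinant.det A\<bar> = \<bar>\<Sum>p\<in>?P. of_int (sign p) * (\<Prod>i = 0..<n. A $$ (i, p i))\<bar>"
    using A unfolding det_def by auto
  also have "\<dots> \<le> (\<Sum>p\<in>?P. \<bar>of_int (sign p) * (\<Prod>i = 0..<n. A $$ (i, p i))\<bar>)"
    by (rule sum_abs)
  also have "\<dots> \<le> (\<Sum>p\<in>?P. W ^ n)"
  proof (rule sum_mono)
    fix p assume "p \<in> ?P"
    then have p: "p permutes {0..<n}" by simp
    have "\<bar>of_int (sign p) * (\<Prod>i = 0..<n. A $$ (i, p i))\<bar> = (\<Prod>i = 0..<n. \<bar>A $$ (i, p i)\<bar>)"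
      by (simp add: abs_mult abs_prod sign_def)
    also have "\<dots> \<le> (\<Prod>i = 0..<n. W)"
    proof (rule prod_mono)
      fix i assume "i \<in> {0..<n}"
      then have "i < n" "p i < n" using permutes_in_image[OF p] by auto
      then show "0 \<le> \<bar>A $$ (i, p i)\<bar> \<and> \<bar>A $$ (i, p i)\<bar> \<le> W" using B by auto
    qed
    finally show "\<bar>of_int (sign p) * (\<Prod>i = 0..<n. A $$ (i, p i))\<bar> \<le> W ^ n" by simp
  qed
  also have "\<dots> = fact n * W ^ n"
    using card_permutations[of "{0..<n}" n] by simp
  finally show ?thesis .
qed

lemma det_zero_row:
  fixes A :: "'a::comm_ring_1 mat"
  assumes A: "A \<in> carrier_mat n n" and k: "k < n" and Z: "\<And>j. j < n \<Longrightarrow> A $$ (k,j) = 0"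
  shows "Determinant.det A = 0"
proof -
  have "\<And>p. p permutes {0..<n} \<Longrightarrow> (\<Prod>i = 0..<n. A $$ (i, p i)) = 0"
  proof -
    fix p assume p: "p permutes {0..<n}"
    have "p k < n" using permutes_in_image[OF p] k by auto
    then show "(\<Prod>i = 0..<n. A $$ (i, p i)) = 0"
      using k Z by (intro prod_zero bexI[of _ k]) auto
  qed
  then show ?thesis using A unfolding det_def by auto
qed

lemma row_select:
  fixes R :: "'a::field vec set"
  assumes "finite R" "R \<subseteq> carrier_vec m"
    and "\<And>v. v \<in> carrier_vec m \<Longrightarrow> (\<forall>r\<in>R. r \<bullet> v = 0) \<Longrightarrow> v = 0\<^sub>v m"
  shows "\<exists>vs. set vs \<subseteq> R \<and> distinct vs \<and> length vs = m \<and> Determinant.det (mat_of_rows m vs) \<noteq> 0"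
  using assms
proof (induction "card R" arbitrary: R rule: less_induct)
  case less
  obtain ws where ws: "distinct ws" "set ws = R" using finite_distinct_list[OF less(2)] by blast
  define L where "L = length ws"
  have LR: "L = card R" using ws L_def distinct_card by fastforce
  have wsc: "\<And>i. i < L \<Longrightarrow> ws ! i \<in> carrier_vec m" using less(3) ws L_def nth_mem by blast
  consider "L = m" | "L < m" | "L > m" by linarith
  then show ?case
  proof cases
    case 1
    define M where "M = mat_of_rows m ws"
    have M: "M \<in> carrier_mat m m" unfolding M_def using mat_of_rows_carrier(1)[of m ws] 1 L_def by metis
    have "Determinant.det M \<noteq> 0"
    proof
      assume "Determinant.det M = 0"
      then obtain v where v: "v \<in> carrier_vec m" "v \<noteq> 0\<^sub>v m" "M *\<^sub>v v = 0\<^sub>v m"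
        using det_0_iff_vec_prod_zero_field[OF M] by blast
      have "\<forall>r\<in>R. r \<bullet> v = 0"
      proof
        fix r assume "r \<in> R"
        then obtain i where i: "i < L" "r = ws ! i" using ws L_def by (metis in_set_conv_nth)
        have "(M *\<^sub>v v) $ i = row M i \<bullet> v" using M i 1 by simp
        also have "row M i = ws ! i" unfolding M_def using i wsc L_def by simp
        finally show "r \<bullet> v = 0" using v(3) i 1 by simp
      qed
      then show False using less(4)[OF v(1)] v(2) by simp
    qed
    then show ?thesis using 1 ws L_def M_def by auto
  next
    case 2
    define M where "M = mat m m (\<lambda>(i,j). if i < L then ws ! i $ j else 0)"
    have M: "M \<in> carrier_mat m m" unfolding M_def by simp
    have "Determinant.det M = 0" using M 2 by (intro det_zero_row[of M m L]) (auto simp: M_def)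
    then obtain v where v: "v \<in> carrier_vec m" "v \<noteq> 0\<^sub>v m" "M *\<^sub>v v = 0\<^sub>v m"
      using det_0_iff_vec_prod_zero_field[OF M] by blast
    have "\<forall>r\<in>R. r \<bullet> v = 0"
    proof
      fix r assume "r \<in> R"
      then obtain i where i: "i < L" "r = ws ! i" using ws L_def by (metis in_set_conv_nth)
      have im: "i < m" using i 2 by simp
      have "(M *\<^sub>v v) $ i = row M i \<bullet> v" using M im by simp
      also have "row M i = ws ! i" unfolding M_def using i im wsc[OF i(1)]
        by (intro eq_vecI) auto
      finally show "r \<bullet> v = 0" using v(3) i im by simp
    qed
    then show ?thesis using less(4)[OF v(1)] v(2) by simp
  next
    case 3
    define Q where "Q = mat L L (\<lambda>(i,j). if i < m then ws ! j $ i else 0)"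
    have Q: "Q \<in> carrier_mat L L" unfolding Q_def by simp
    have "Determinant.det Q = 0" using Q 3 by (intro det_zero_row[of Q L m]) (auto simp: Q_def)
    then obtain w where w: "w \<in> carrier_vec L" "w \<noteq> 0\<^sub>v L" "Q *\<^sub>v w = 0\<^sub>v L"
      using det_0_iff_vec_prod_zero_field[OF Q] by blast
    obtain r where r: "r < L" "w $ r \<noteq> 0"
      using w(1,2) by (metis eq_vecI carrier_vecD index_zero_vec(1,2))
    have lc: "\<And>i. i < m \<Longrightarrow> (\<Sum>j<L. ws ! j $ i * w $ j) = 0"
    proof -
      fix i assume im: "i < m"
      have iL: "i < L" using im 3 by simp
      have "(Q *\<^sub>v w) $ i = row Q i \<bullet> w" using Q iL by simp
      also have "\<dots> = (\<Sum>j<L. ws ! j $ i * w $ j)"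
        unfolding Q_def scalar_prod_def using w(1) im iL by (auto intro!: sum.cong simp: atLeast0LessThan)
      finally show "(\<Sum>j<L. ws ! j $ i * w $ j) = 0" using w(3) iL by simp
    qed
    define R' where "R' = R - {ws ! r}"
    have wsrR: "ws ! r \<in> R" using r ws L_def by auto
    have card': "card R' < card R" unfolding R'_def using wsrR less(2) by (intro card_Diff1_less)
    have fin': "finite R'" "R' \<subseteq> carrier_vec m" using less(2,3) R'_def by auto
    have ker': "\<And>v. v \<in> carrier_vec m \<Longrightarrow> (\<forall>x\<in>R'. x \<bullet> v = 0) \<Longrightarrow> v = 0\<^sub>v m"
    proof -
      fix v :: "'a vec" assume v: "v \<in> carrier_vec m" and o: "\<forall>x\<in>R'. x \<bullet> v = 0"
      have "(\<Sum>j<L. w $ j * (ws ! j \<bullet> v)) = (\<Sum>j<L. \<Sum>i<m. w $ j * (ws ! j $ i * v $ i))"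
        unfolding scalar_prod_def using v by (simp add: sum_distrib_left atLeast0LessThan)
      also have "\<dots> = (\<Sum>i<m. \<Sum>j<L. w $ j * (ws ! j $ i * v $ i))" by (rule sum.swap)
      also have "\<dots> = (\<Sum>i<m. v $ i * (\<Sum>j<L. ws ! j $ i * w $ j))"
        by (simp add: sum_distrib_left algebra_simps)
      also have "\<dots> = 0" using lc by simp
      finally have s0: "(\<Sum>j<L. w $ j * (ws ! j \<bullet> v)) = 0" .
      have "(\<Sum>j<L. w $ j * (ws ! j \<bullet> v)) = w $ r * (ws ! r \<bullet> v)"
      proof (rule sum.remove[THEN trans])
        show "finite {..<L}" by simp
        show "r \<in> {..<L}" using r by simp
        have "\<And>j. j \<in> {..<L} - {r} \<Longrightarrow> w $ j * (ws ! j \<bullet> v) = 0"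
        proof -
          fix j assume "j \<in> {..<L} - {r}"
          then have "j < L" "j \<noteq> r" by auto
          then have "ws ! j \<in> R'" unfolding R'_def using ws L_def r nth_eq_iff_index_eq by fastforce
          then show "w $ j * (ws ! j \<bullet> v) = 0" using o by simp
        qed
        then show "w $ r * (ws ! r \<bullet> v) + (\<Sum>j\<in>{..<L} - {r}. w $ j * (ws ! j \<bullet> v)) = w $ r * (ws ! r \<bullet> v)"
          by (simp add: sum.neutral)
      qed
      then have "ws ! r \<bullet> v = 0" using s0 r(2) by simp
      then have "\<forall>x\<in>R. x \<bullet> v = 0" using o R'_def by auto
      then show "v = 0\<^sub>v m" using less(4)[OF v] by simp
    qed
    from less(1)[OF card' fin' ker'] show ?thesis using R'_def by blast
  qed
qed


lemma cramer_frac: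
  fixes R :: "real vec set" and y :: "real vec"
  assumes fin: "finite R" and Rc: "R \<subseteq> carrier_vec m"
    and ker: "\<And>v. v \<in> carrier_vec m \<Longrightarrow> (\<forall>r\<in>R. r \<bullet> v = 0) \<Longrightarrow> v = 0\<^sub>v m"
    and y: "y \<in> carrier_vec m"
    and ry: "\<And>r. r \<in> R \<Longrightarrow> r \<bullet> y \<in> \<int>"
    and ent: "\<And>r i. r \<in> R \<Longrightarrow> i < m \<Longrightarrow> r $ i \<in> \<int> \<and> \<bar>r $ i\<bar> \<le> W"
    and W: "W \<ge> 0"
  shows "\<exists>D::int. D > 0 \<and> real_of_int D \<le> fact m * W ^ m \<and> (\<forall>k<m. y $ k * of_int D \<in> \<int>) \<and> m \<le> card R"
proof -
  obtain vs where vs: "set vs \<subseteq> R" "length vs = m" "Determinant.det (mat_of_rows m vs) \<noteq> 0"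
    and dvs: "distinct vs"
    using row_select[OF fin Rc ker] by blast
  have mR: "m \<le> card R" using card_mono[OF fin vs(1)] distinct_card[OF dvs] vs(2) by simp
  define M where "M = mat_of_rows m vs"
  have M: "M \<in> carrier_mat m m" unfolding M_def using mat_of_rows_carrier(1)[of m vs] vs(2) by metis
  have vsc: "\<And>i. i < m \<Longrightarrow> vs ! i \<in> carrier_vec m" using vs Rc nth_mem by blast
  have vsR: "\<And>i. i < m \<Longrightarrow> vs ! i \<in> R" using vs nth_mem by blast
  have Mij: "\<And>i j. i < m \<Longrightarrow> j < m \<Longrightarrow> M $$ (i,j) = vs ! i $ j"
    unfolding M_def using vs(2) by (simp add: mat_of_rows_index)
  define bv where "bv = M *\<^sub>v y"
  have bvi: "\<And>i. i < m \<Longrightarrow> bv $ i = vs ! i \<bullet> y"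
  proof -
    fix i assume i: "i < m"
    have "bv $ i = row M i \<bullet> y" unfolding bv_def using M i by simp
    also have "row M i = vs ! i" unfolding M_def using vs(2) i vsc by simp
    finally show "bv $ i = vs ! i \<bullet> y" .
  qed
  have detZ: "Determinant.det M \<in> \<int>"
    using M by (rule det_Ints) (use Mij vsR ent in auto)
  then obtain d0 where d0: "Determinant.det M = of_int d0" by (auto elim: Ints_cases)
  have d0nz: "d0 \<noteq> 0" using vs(3) d0 M_def by auto
  define D where "D = \<bar>d0\<bar>"
  have Dpos: "D > 0" using d0nz D_def by simp
  have "\<bar>Determinant.det M\<bar> \<le> fact m * W ^ m"
    using M W by (rule det_bound) (use Mij vsR ent in auto)
  then have Db: "real_of_int D \<le> fact m * W ^ m" using d0 D_def by simp
  have "\<forall>k<m. y $ k * of_int D \<in> \<int>"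
  proof (intro allI impI)
    fix k assume k: "k < m"
    have c: "Determinant.det (replace_col M bv k) = y $ k * Determinant.det M"
      unfolding bv_def by (rule cramer_lemma_mat[OF M y k])
    have RC: "replace_col M bv k \<in> carrier_mat m m" using M by (auto simp: replace_col_def)
    have "Determinant.det (replace_col M bv k) \<in> \<int>"
    proof (rule det_Ints[OF RC])
      fix i j assume ij: "i < m" "j < m"
      show "replace_col M bv k $$ (i, j) \<in> \<int>"
        using ij M Mij vsR ent bvi ry by (auto simp: replace_col_def)
    qed
    then have "y $ k * of_int d0 \<in> \<int>" using c d0 by simp
    then have "y $ k * of_int d0 * of_int (sgn d0) \<in> \<int>" by (rule Ints_mult) (rule Ints_of_int)
    moreover have "of_int d0 * of_int (sgn d0) = (of_int D :: real)"
      unfolding D_def by (metis abs_sgn mult.commute of_int_mult)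
    ultimately show "y $ k * of_int D \<in> \<int>" by (simp add: mult.assoc)
  qed
  then show ?thesis using Dpos Db mR by blast
qed




definition lin :: "(nat \<Rightarrow> real) \<Rightarrow> nat \<Rightarrow> (nat \<Rightarrow> real) \<Rightarrow> real" where
  "lin c n x = (\<Sum>i\<le>n. c i * x i)"

definition feasLP :: "'k set \<Rightarrow> ('k \<Rightarrow> nat \<Rightarrow> real) \<Rightarrow> ('k \<Rightarrow> real) \<Rightarrow> nat \<Rightarrow> (nat \<Rightarrow> real) \<Rightarrow> bool" where
  "feasLP K c b n x \<longleftrightarrow> (\<forall>k\<in>K. lin (c k) n x \<ge> b k) \<and> (\<Sum>i<n. x i) = 1 \<and> x n > 0"

definition tightLP :: "'k set \<Rightarrow> ('k \<Rightarrow> nat \<Rightarrow> real) \<Rightarrow> ('k \<Rightarrow> real) \<Rightarrow> nat \<Rightarrow> (nat \<Rightarrow> real) \<Rightarrow> 'k set" where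
  "tightLP K c b n x = {k\<in>K. lin (c k) n x = b k}"

lemma lin_move: "lin c n (\<lambda>i. x i + t * d i) = lin c n x + t * lin c n d"
  unfolding lin_def by (simp add: algebra_simps sum.distrib sum_distrib_left)

lemma LP_stuck:
  assumes K: "finite K" and f0: "feasLP K c b n x0"
  shows "\<exists>x. feasLP K c b n x \<and> (\<forall>d. (\<Sum>i<n. d i) = 0 \<longrightarrow> (\<forall>k\<in>tightLP K c b n x. lin (c k) n d = 0)
            \<longrightarrow> d n \<ge> 0 \<longrightarrow> (\<forall>k\<in>K. lin (c k) n d \<ge> 0))"
proof -
  have bnd: "\<And>y. feasLP K c b n y \<Longrightarrow> card (tightLP K c b n y) < card K + 1"
  proof -
    fix y
    have "tightLP K c b n y \<subseteq> K" unfolding tightLP_def by auto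
    then show "card (tightLP K c b n y) < card K + 1" using card_mono[OF K] by (simp add: less_Suc_eq_le)
  qed
  obtain x where fx: "feasLP K c b n x"
    and mx: "\<And>y. feasLP K c b n y \<Longrightarrow> card (tightLP K c b n y) \<le> card (tightLP K c b n x)"
  proof -
    have "\<exists>x. feasLP K c b n x \<and> (\<forall>y. feasLP K c b n y \<longrightarrow> card (tightLP K c b n y) \<le> card (tightLP K c b n x))"
      by (rule Lattices_Big.ex_has_greatest_nat[of "feasLP K c b n" x0 "\<lambda>y. card (tightLP K c b n y)" "card K + 1"])
        (use f0 bnd in auto)
    then show ?thesis using that by blast
  qed
  have "\<forall>d. (\<Sum>i<n. d i) = 0 \<longrightarrow> (\<forall>k\<in>tightLP K c b n x. lin (c k) n d = 0)
            \<longrightarrow> d n \<ge> 0 \<longrightarrow> (\<forall>k\<in>K. lin (c k) n d \<ge> 0)"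
  proof (intro allI impI)
    fix d assume s0: "(\<Sum>i<n. d i) = 0" and kr: "\<forall>k\<in>tightLP K c b n x. lin (c k) n d = 0"
      and dn: "d n \<ge> 0"
    show "\<forall>k\<in>K. lin (c k) n d \<ge> 0"
    proof (rule ccontr)
      assume "\<not> (\<forall>k\<in>K. lin (c k) n d \<ge> 0)"
      then obtain k0 where k0: "k0 \<in> K" "lin (c k0) n d < 0" by force
      define B where "B = {k\<in>K. lin (c k) n d < 0}"
      have Bfin: "finite B" using K B_def by simp
      have k0B: "k0 \<in> B" using k0 B_def by simp
      define ratio where "ratio k = (lin (c k) n x - b k) / (- lin (c k) n d)" for k
      define t where "t = Min (ratio ` B)"
      have slack: "\<And>k. k \<in> B \<Longrightarrow> lin (c k) n x - b k > 0"
      proof -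
        fix k assume kB: "k \<in> B"
        then have "k \<notin> tightLP K c b n x" using kr B_def by force
        moreover have "lin (c k) n x \<ge> b k" using fx kB B_def unfolding feasLP_def by auto
        ultimately show "lin (c k) n x - b k > 0" using kB B_def unfolding tightLP_def by auto
      qed
      have rpos: "\<And>k. k \<in> B \<Longrightarrow> ratio k > 0"
      proof -
        fix k assume kB: "k \<in> B"
        have "- lin (c k) n d > 0" using kB B_def by simp
        then show "ratio k > 0" unfolding ratio_def using slack[OF kB] by (rule divide_pos_pos[rotated])
      qed
      have tle: "\<And>k. k \<in> B \<Longrightarrow> t \<le> ratio k" unfolding t_def using Bfin by auto
      obtain k1 where k1: "k1 \<in> B" "t = ratio k1"
      proof -
        have "t \<in> ratio ` B" unfolding t_def using Bfin k0B by (intro Min_in) auto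
        then show ?thesis using that by blast
      qed
      have tpos: "t > 0" using k1 rpos by simp
      define y where "y i = x i + t * d i" for i
      have liny: "\<And>k. lin (c k) n y = lin (c k) n x + t * lin (c k) n d"
        unfolding y_def by (rule lin_move)
      have fy: "feasLP K c b n y"
        unfolding feasLP_def
      proof (intro conjI ballI)
        fix k assume kK: "k \<in> K"
        show "b k \<le> lin (c k) n y"
        proof (cases "k \<in> B")
          case True
          then have ld: "lin (c k) n d < 0" using B_def by simp
          have "t * lin (c k) n d \<ge> ratio k * lin (c k) n d"
            using tle[OF True] ld by (simp add: mult_right_mono_neg)
          moreover have "ratio k * lin (c k) n d = b k - lin (c k) n x"
            unfolding ratio_def using ld by (simp add: field_simps)
          ultimately show ?thesis using liny by simp
        next
          case False
          then have "lin (c k) n d \<ge> 0" using B_def kK by simp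
          moreover have "lin (c k) n x \<ge> b k" using fx kK unfolding feasLP_def by auto
          ultimately show ?thesis using liny tpos by (simp add: add_increasing2)
        qed
      next
        have "(\<Sum>i<n. y i) = (\<Sum>i<n. x i) + t * (\<Sum>i<n. d i)"
          unfolding y_def by (simp add: sum.distrib sum_distrib_left)
        then show "(\<Sum>i<n. y i) = 1" using fx s0 unfolding feasLP_def by simp
      next
        show "y n > 0" using fx dn tpos unfolding y_def feasLP_def
          by (simp add: add_pos_nonneg)
      qed
      have sub: "tightLP K c b n x \<subseteq> tightLP K c b n y"
        using kr liny unfolding tightLP_def by auto
      have k1y: "k1 \<in> tightLP K c b n y"
      proof -
        have ld: "lin (c k1) n d < 0" using k1 B_def by simp
        have "lin (c k1) n y = lin (c k1) n x + ratio k1 * lin (c k1) n d" using liny k1 by simp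
        also have "\<dots> = b k1" unfolding ratio_def using ld by (simp add: field_simps)
        finally show ?thesis using k1 B_def unfolding tightLP_def by simp
      qed
      have k1x: "k1 \<notin> tightLP K c b n x" using slack[OF k1(1)] unfolding tightLP_def by auto
      have "tightLP K c b n x \<subset> tightLP K c b n y" using sub k1y k1x by blast
      moreover have "finite (tightLP K c b n y)" using K unfolding tightLP_def by simp
      ultimately have "card (tightLP K c b n x) < card (tightLP K c b n y)" by (rule psubset_card_mono[rotated])
      then show False using mx[OF fy] by simp
    qed
  qed
  then show ?thesis using fx by blast
qed




primrec patoms :: "'b pfml \<Rightarrow> (rat \<times> 'b fml) list" where
  "patoms (Pge s a) = [(s, a)]"
| "patoms (PNeg A) = patoms A"
| "patoms (PConj A B) = patoms A @ patoms B"

primrec peval :: "((rat \<times> 'b fml) \<Rightarrow> bool) \<Rightarrow> 'b pfml \<Rightarrow> bool" where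
  "peval f (Pge s a) = f (s, a)"
| "peval f (PNeg A) = (\<not> peval f A)"
| "peval f (PConj A B) = (peval f A \<and> peval f B)"

lemma psat_peval: "psat M v A = peval (\<lambda>(s, a). measure M (ext M v a) \<ge> real_of_rat s) A"
  by (induction A) auto

lemma peval_cong: "(\<And>p. p \<in> set (patoms A) \<Longrightarrow> f p = g p) \<Longrightarrow> peval f A = peval g A"
  by (induction A) auto

lemma fsize_pos: "Suc 0 \<le> fsize a"
  by (induction a) auto

lemma patoms_len: "2 * length (patoms A) \<le> psize A"
  by (induction A) (auto simp: fsize_pos)

lemma patoms_nonempty: "length (patoms A) \<ge> 1"
  by (induction A) auto

lemma thresholds_patoms: "thresholds A = fst ` set (patoms A)"
  by (induction A) auto

lemma finite_thresholds: "finite (thresholds A)"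
  by (induction A) auto

lemma ratsize_le_max: "p \<in> set (patoms A) \<Longrightarrow> ratsize (fst p) \<le> maxratsize A"
  unfolding maxratsize_def using finite_thresholds[of A] thresholds_patoms[of A]
  by (intro Max_ge) auto

lemma fbasics_patoms: "p \<in> set (patoms A) \<Longrightarrow> fbasics (snd p) \<subseteq> pbasics A"
  by (induction A) auto

lemma finite_fbasics: "finite (fbasics a)"
  by (induction a) auto

lemma finite_pbasics: "finite (pbasics A)"
  by (induction A) (auto simp: finite_fbasics)

lemma fbasics_nonempty: "fbasics a \<noteq> {}"
  by (induction a) auto

lemma pbasics_nonempty: "pbasics A \<noteq> {}"
  by (induction A) (auto simp: fbasics_nonempty)

lemma eval_cong: "(\<And>b. b \<in> fbasics a \<Longrightarrow> u b = u' b) \<Longrightarrow> eval u a = eval u' a"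
  by (induction a) auto

lemma eval_conjs:
  "xs \<noteq> [] \<Longrightarrow> eval u (conjs (map (\<lambda>B. if f B then Basic B else Neg (Basic B)) xs))
     \<longleftrightarrow> (\<forall>B\<in>set xs. u B = f B)"
proof (induction xs)
  case Nil
  then show ?case by simp
next
  case (Cons x xs)
  then show ?case by (cases xs) auto
qed

lemma finite_restricted: "finite Bs \<Longrightarrow> finite {t :: 'b \<Rightarrow> bool. \<forall>b. t b \<longrightarrow> b \<in> Bs}"
proof -
  assume f: "finite Bs"
  have "{t :: 'b \<Rightarrow> bool. \<forall>b. t b \<longrightarrow> b \<in> Bs} \<subseteq> (\<lambda>S b. b \<in> S) ` Pow Bs"
  proof
    fix t :: "'b \<Rightarrow> bool" assume "t \<in> {t. \<forall>b. t b \<longrightarrow> b \<in> Bs}"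
    then have "t = (\<lambda>b. b \<in> {b. t b})" "{b. t b} \<in> Pow Bs" by auto
    then show "t \<in> (\<lambda>S b. b \<in> S) ` Pow Bs" by blast
  qed
  then show ?thesis using finite_subset finite_imageI finite_Pow_iff f by metis
qed

lemma n_lt_bitlen: "n < 2 ^ bitlen n"
proof (induction n rule: less_induct)
  case (less n)
  show ?case
  proof (cases "n < 2")
    case True then show ?thesis by (subst bitlen.simps) simp
  next
    case False
    then have h: "n div 2 < 2 ^ bitlen (n div 2)" using less by simp
    have e: "bitlen n = Suc (bitlen (n div 2))" using False by (subst bitlen.simps) simp
    show ?thesis unfolding e using h by simp
  qed
qed




lemma final_bound:
  fixes D :: int and m N L :: nat
  assumes D: "D > 0" and Db: "real_of_int D \<le> fact m * (2 ^ L) ^ m"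
    and m: "1 \<le> m" "m \<le> N"
  shows "real (2 * bitlen (nat D)) \<le> 2 * (real N * real L + real N * log 2 (real N) + 1)"
proof -
  have D1: "nat D \<ge> 1" using D by simp
  have "real (bitlen (nat D)) \<le> log 2 (real (nat D)) + 1" by (rule bitlen_log[OF D1])
  also have "real (nat D) = real_of_int D" using D by simp
  also have "log 2 (real_of_int D) \<le> log 2 (fact m * (2 ^ L) ^ m)"
    using Db D by (intro log_le_cancel_iff[THEN iffD2]) auto
  also have "log 2 (fact m * (2 ^ L) ^ m) = log 2 (fact m) + real m * real L"
  proof -
    have "log 2 (fact m * (2 ^ L) ^ m) = log 2 (fact m) + log 2 ((2 ^ L) ^ m)"
      by (rule log_mult_pos) auto
    also have "log 2 (((2::real) ^ L) ^ m) = real m * real L"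
      by (simp add: log_nat_power power_mult[symmetric] mult.commute)
    finally show ?thesis .
  qed
  also have "log 2 (fact m) \<le> log 2 (real m ^ m)"
    using fact_le_power[of m] by (intro log_le_cancel_iff[THEN iffD2]) (auto simp: m)
  also have "log 2 (real m ^ m) = real m * log 2 (real m)"
    using m by (simp add: log_nat_power)
  also have "real m * log 2 (real m) \<le> real N * log 2 (real N)"
  proof (rule mult_mono)
    show "real m \<le> real N" using m by simp
    show "log 2 (real m) \<le> log 2 (real N)" using m by (intro log_le_cancel_iff[THEN iffD2]) auto
    show "0 \<le> real N" by simp
    show "0 \<le> log 2 (real m)" using m by simp
  qed
  finally have "real (bitlen (nat D)) \<le> real N * log 2 (real N) + real m * real L + 1" by simp
  moreover have "real m * real L \<le> real N * real L" using m by (intro mult_right_mono) auto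
  ultimately show ?thesis by simp
qed




definition restr :: "'b set \<Rightarrow> ('b \<Rightarrow> bool) \<Rightarrow> 'b \<Rightarrow> bool" where
  "restr Bs u b = (b \<in> Bs \<and> u b)"

definition cfml :: "'b set \<Rightarrow> ('b \<Rightarrow> bool) \<Rightarrow> 'b fml" where
  "cfml Bs t = conjs (map (\<lambda>B. if t B then Basic B else Neg (Basic B)) (SOME xs. distinct xs \<and> set xs = Bs))"

lemma eval_cfml:
  assumes "finite Bs" "Bs \<noteq> {}"
  shows "eval u (cfml Bs t) \<longleftrightarrow> (\<forall>B\<in>Bs. u B = t B)"
proof -
  let ?xs = "SOME xs. distinct xs \<and> set xs = Bs"
  have "distinct ?xs \<and> set ?xs = Bs"
    by (rule someI_ex) (use finite_distinct_list[OF assms(1)] in blast)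
  then have "?xs \<noteq> []" "set ?xs = Bs" using assms(2) by auto
  then show ?thesis unfolding cfml_def using eval_conjs[of ?xs u t] by simp
qed

lemma restr_eq: "restr Bs u = restr Bs u' \<longleftrightarrow> (\<forall>B\<in>Bs. u B = u' B)"
  by (auto simp: restr_def fun_eq_iff)

lemma eval_restr: "fbasics a \<subseteq> Bs \<Longrightarrow> eval (restr Bs u) a = eval u a"
  by (rule eval_cong) (auto simp: restr_def)

lemma restr_in: "restr Bs u \<in> {t. \<forall>b. t b \<longrightarrow> b \<in> Bs}"
  by (auto simp: restr_def)

lemma ext_cfml:
  assumes "finite Bs" "Bs \<noteq> {}"
  shows "ext M v (cfml Bs (restr Bs u)) = {w \<in> space M. restr Bs (v w) = restr Bs u}"
  unfolding ext_def using eval_cfml[OF assms] by (auto simp: restr_eq restr_def)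

lemma union_measure:
  assumes PL: "PL_model Adm M v" and fin: "finite Bs" "Bs \<noteq> {}"
    and S: "S \<subseteq> (\<lambda>w. restr Bs (v w)) ` space M"
  shows "measure M (\<Union>t\<in>S. ext M v (cfml Bs t)) = (\<Sum>t\<in>S. measure M (ext M v (cfml Bs t)))"
proof -
  have fm: "finite_measure M" using PL unfolding PL_model_def by (auto intro: prob_space.finite_measure)
  have "S \<subseteq> {t. \<forall>b. t b \<longrightarrow> b \<in> Bs}" using S by (auto simp: restr_def)
  then have finS: "finite S" using finite_restricted[OF fin(1)] by (rule finite_subset)
  have sets: "(\<lambda>t. ext M v (cfml Bs t)) ` S \<subseteq> sets M" using PL unfolding PL_model_def by auto
  have disj: "disjoint_family_on (\<lambda>t. ext M v (cfml Bs t)) S"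
    unfolding disjoint_family_on_def
  proof (intro ballI impI)
    fix t t' assume tS: "t \<in> S" and t'S: "t' \<in> S" and ne: "t \<noteq> t'"
    obtain u where u: "t = restr Bs u" using tS S by auto
    obtain u' where u': "t' = restr Bs u'" using t'S S by auto
    show "ext M v (cfml Bs t) \<inter> ext M v (cfml Bs t') = {}"
      using ne unfolding u u' ext_cfml[OF fin] by auto
  qed
  show ?thesis by (rule finite_measure.finite_measure_finite_Union[OF fm finS sets disj])
qed





theorem mainTheorem2:
  fixes Adm :: "('b \<Rightarrow> bool) set"
    and A :: "'b pfml"
    and M :: "'w measure" and v :: "'w \<Rightarrow> 'b \<Rightarrow> bool"
  assumes "wf_pfml A"
    and "PL_model Adm M v" and "psat M v A"
  shows "\<exists>(M' :: nat measure) v'. PL_model Adm M' v' \<and> psat M' v' A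
     \<and> finite (space M') \<and> card (space M') \<le> psize A
     \<and> sets M' = Pow (space M')
     \<and> (\<forall>w\<in>space M'. \<exists>q::rat. measure M' {w} = real_of_rat q \<and> 0 \<le> q
          \<and> real (ratsize q) \<le> 2 * (real (psize A) * real (maxratsize A)
                + real (psize A) * log 2 (real (psize A)) + 1))
     \<and> (\<forall>a\<in>cpnb A. \<forall>w1\<in>space M'. \<forall>w2\<in>space M'.
          eval (v' w1) a \<and> eval (v' w2) a \<longrightarrow> w1 = w2)"
proof -
  note PL = assms(2)
  have ps: "prob_space M" using PL unfolding PL_model_def by simp
  define Bs where "Bs = pbasics A"
  have Bfin: "finite Bs" "Bs \<noteq> {}" using finite_pbasics pbasics_nonempty Bs_def by auto
  define rv where "rv w = restr Bs (v w)" for w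
  define Ty where "Ty = rv ` space M"
  have Tysub: "Ty \<subseteq> {t. \<forall>b. t b \<longrightarrow> b \<in> Bs}" unfolding Ty_def rv_def by (auto simp: restr_def)
  have Tyfin: "finite Ty" using finite_restricted[OF Bfin(1)] Tysub by (rule finite_subset[rotated])
  define p where "p t = measure M (ext M v (cfml Bs t))" for t
  have p0: "\<And>t. p t \<ge> 0" unfolding p_def by simp
  have extU: "\<And>t. t \<in> Ty \<Longrightarrow> ext M v (cfml Bs t) = {w \<in> space M. rv w = t}"
  proof -
    fix t assume "t \<in> Ty"
    then obtain w where "w \<in> space M" "t = restr Bs (v w)" unfolding Ty_def rv_def by auto
    then show "ext M v (cfml Bs t) = {w \<in> space M. rv w = t}"
      using ext_cfml[OF Bfin, of M v "v w"] unfolding rv_def by simp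
  qed
  have key: "\<And>\<alpha>. fbasics \<alpha> \<subseteq> Bs \<Longrightarrow> measure M (ext M v \<alpha>) = (\<Sum>t\<in>{t\<in>Ty. eval t \<alpha>}. p t)"
  proof -
    fix \<alpha> :: "'b fml" assume fb: "fbasics \<alpha> \<subseteq> Bs"
    have "ext M v \<alpha> = (\<Union>t\<in>{t\<in>Ty. eval t \<alpha>}. ext M v (cfml Bs t))"
    proof -
      have "\<And>w. w \<in> space M \<Longrightarrow> eval (v w) \<alpha> = eval (rv w) \<alpha>"
        unfolding rv_def using eval_restr[OF fb] by simp
      then show ?thesis unfolding ext_def using extU[unfolded ext_def] Ty_def by auto
    qed
    moreover have "measure M (\<Union>t\<in>{t\<in>Ty. eval t \<alpha>}. ext M v (cfml Bs t)) = (\<Sum>t\<in>{t\<in>Ty. eval t \<alpha>}. p t)"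
      unfolding p_def by (rule union_measure[OF PL Bfin]) (auto simp: Ty_def rv_def)
    ultimately show "measure M (ext M v \<alpha>) = (\<Sum>t\<in>{t\<in>Ty. eval t \<alpha>}. p t)" by simp
  qed
  have tot: "(\<Sum>t\<in>Ty. p t) = 1"
  proof -
    have "space M = (\<Union>t\<in>Ty. ext M v (cfml Bs t))" using extU Ty_def by auto
    then have "measure M (space M) = (\<Sum>t\<in>Ty. p t)"
      unfolding p_def using union_measure[OF PL Bfin, of Ty] by (auto simp: Ty_def rv_def)
    then show ?thesis using prob_space.prob_space[OF ps] by simp
  qed
  define T where "T = {t\<in>Ty. p t > 0}"
  have Tfin: "finite T" using Tyfin T_def by simp
  have drop0: "\<And>X. X \<subseteq> Ty \<Longrightarrow> (\<Sum>t\<in>X. p t) = (\<Sum>t\<in>X \<inter> T. p t)"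
  proof -
    fix X assume X: "X \<subseteq> Ty"
    have "finite X" using X Tyfin by (rule finite_subset)
    then show "(\<Sum>t\<in>X. p t) = (\<Sum>t\<in>X \<inter> T. p t)"
      using p0 T_def X by (intro sum.mono_neutral_right) (auto simp: less_le)
  qed
  have key2: "\<And>\<alpha>. fbasics \<alpha> \<subseteq> Bs \<Longrightarrow> measure M (ext M v \<alpha>) = (\<Sum>t\<in>{t\<in>T. eval t \<alpha>}. p t)"
  proof -
    fix \<alpha> :: "'b fml" assume fb: "fbasics \<alpha> \<subseteq> Bs"
    have "{t\<in>Ty. eval t \<alpha>} \<inter> T = {t\<in>T. eval t \<alpha>}" using T_def by auto
    then show "measure M (ext M v \<alpha>) = (\<Sum>t\<in>{t\<in>T. eval t \<alpha>}. p t)"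
      using key[OF fb] drop0[of "{t\<in>Ty. eval t \<alpha>}"] by auto
  qed
  have tot2: "(\<Sum>t\<in>T. p t) = 1" using tot drop0[of Ty] T_def by (simp add: Int_absorb1)
  obtain ts where ts: "distinct ts" "set ts = T" using finite_distinct_list[OF Tfin] by blast
  define n where "n = length ts"
  have bij: "bij_betw ((!) ts) {..<n} T" using ts n_def by (intro bij_betw_nth) auto
  have sumts: "\<And>g. (\<Sum>i<n. g (ts ! i)) = (\<Sum>t\<in>T. g t)"
    using sum.reindex_bij_betw[OF bij] by simp
  have tsT: "\<And>i. i < n \<Longrightarrow> ts ! i \<in> T" using ts n_def nth_mem by blast
  have wit: "\<And>t. t \<in> T \<Longrightarrow> \<exists>w\<in>space M. rv w = t" using T_def Ty_def by auto
  define P where "P = patoms A"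
  have Pfb: "\<And>j. j < length P \<Longrightarrow> fbasics (snd (P ! j)) \<subseteq> Bs"
    using fbasics_patoms P_def Bs_def nth_mem by blast
  define val where "val j = measure M (ext M v (snd (P ! j)))" for j
  define tr where "tr j = (val j \<ge> real_of_rat (fst (P ! j)))" for j
  define a where "a j i = (if eval (ts ! i) (snd (P ! j)) then 1 else (0::real))" for j i
  have val_sum: "\<And>j. j < length P \<Longrightarrow> val j = (\<Sum>i<n. a j i * p (ts ! i))"
  proof -
    fix j assume j: "j < length P"
    have "val j = (\<Sum>t\<in>{t\<in>T. eval t (snd (P ! j))}. p t)" unfolding val_def by (rule key2[OF Pfb[OF j]])
    also have "\<dots> = (\<Sum>t\<in>T. (if eval t (snd (P ! j)) then 1 else 0) * p t)"
      using Tfin by (auto simp: sum.inter_filter intro!: sum.cong)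
    also have "\<dots> = (\<Sum>i<n. a j i * p (ts ! i))" unfolding a_def
      using sumts[of "\<lambda>t. (if eval t (snd (P ! j)) then 1 else 0) * p t"] by simp
    finally show "val j = (\<Sum>i<n. a j i * p (ts ! i))" .
  qed

  define c where "c k = (case k of Inl i \<Rightarrow> (\<lambda>l. if l = i then 1 else 0)
      | Inr j \<Rightarrow> (if tr j then (\<lambda>l. if l < n then a j l else 0)
                 else (\<lambda>l. if l < n then - a j l else if l = n then -1 else 0)))" for k :: "nat + nat"
  define bb where "bb k = (case k of Inl i \<Rightarrow> 0
      | Inr j \<Rightarrow> (if tr j then real_of_rat (fst (P ! j)) else - real_of_rat (fst (P ! j))))" for k :: "nat + nat"
  define K where "K = Inl ` {..<n} \<union> Inr ` {..<length P}"
  have Kfin: "finite K" unfolding K_def by simp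
  have linL: "\<And>i x. i < n \<Longrightarrow> lin (c (Inl i)) n x = x i"
  proof -
    fix i x assume i: "i < n"
    have "lin (c (Inl i)) n x = (\<Sum>ia\<le>n. if ia = i then x ia else 0)"
      unfolding lin_def c_def by (intro sum.cong) auto
    then show "lin (c (Inl i)) n x = x i" using i by simp
  qed
  have linT: "\<And>j x. tr j \<Longrightarrow> lin (c (Inr j)) n x = (\<Sum>i<n. a j i * x i)"
  proof -
    fix j x assume "tr j"
    then have "lin (c (Inr j)) n x = (\<Sum>i\<le>n. (if i < n then a j i else 0) * x i)"
      unfolding lin_def c_def by simp
    also have "\<dots> = (\<Sum>i<n. a j i * x i)" by (simp add: lessThan_Suc_atMost[symmetric])
    finally show "lin (c (Inr j)) n x = (\<Sum>i<n. a j i * x i)" .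
  qed
  have linF: "\<And>j x. \<not> tr j \<Longrightarrow> lin (c (Inr j)) n x = - (\<Sum>i<n. a j i * x i) - x n"
  proof -
    fix j x assume "\<not> tr j"
    then have "lin (c (Inr j)) n x = (\<Sum>i\<le>n. (if i < n then - a j i else if i = n then -1 else 0) * x i)"
      unfolding lin_def c_def by simp
    also have "\<dots> = (\<Sum>i<n. - a j i * x i) - x n" by (simp add: lessThan_Suc_atMost[symmetric])
    finally show "lin (c (Inr j)) n x = - (\<Sum>i<n. a j i * x i) - x n" by (simp add: sum_negf)
  qed
  define Fs where "Fs = {j. j < length P \<and> \<not> tr j}"
  have Fsfin: "finite Fs" unfolding Fs_def by simp
  define eps where "eps = Min (insert 1 ((\<lambda>j. real_of_rat (fst (P ! j)) - val j) ` Fs))"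
  have epos: "eps > 0"
    unfolding eps_def using Fsfin by (subst Min_gr_iff) (auto simp: Fs_def tr_def)
  have eps_le: "\<And>j. j \<in> Fs \<Longrightarrow> eps \<le> real_of_rat (fst (P ! j)) - val j"
    unfolding eps_def using Fsfin by (intro Min_le) auto
  define x0 where "x0 l = (if l < n then p (ts ! l) else eps)" for l
  have f0: "feasLP K c bb n x0"
    unfolding feasLP_def
  proof (intro conjI ballI)
    fix k assume "k \<in> K"
    then consider (L) i where "i < n" "k = Inl i" | (R) j where "j < length P" "k = Inr j"
      unfolding K_def by auto
    then show "bb k \<le> lin (c k) n x0"
    proof cases
      case L then show ?thesis using linL p0 by (simp add: bb_def x0_def)
    next
      case R
      have vj: "val j = (\<Sum>i<n. a j i * x0 i)" using val_sum[OF R(1)] by (simp add: x0_def)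
      show ?thesis
      proof (cases "tr j")
        case True then show ?thesis using R linT vj by (simp add: bb_def tr_def)
      next
        case False
        then have "j \<in> Fs" using R Fs_def by simp
        then have "eps \<le> real_of_rat (fst (P ! j)) - val j" by (rule eps_le)
        then show ?thesis using R False linF vj by (simp add: bb_def x0_def)
      qed
    qed
  next
    show "(\<Sum>i<n. x0 i) = 1" using tot2 sumts[of p] by (simp add: x0_def)
  next
    show "x0 n > 0" using epos by (simp add: x0_def)
  qed
  obtain x where fx: "feasLP K c bb n x" and st: "\<forall>d. (\<Sum>i<n. d i) = 0 \<longrightarrow> (\<forall>k\<in>tightLP K c bb n x. lin (c k) n d = 0)
            \<longrightarrow> d n \<ge> 0 \<longrightarrow> (\<forall>k\<in>K. lin (c k) n d \<ge> 0)"
    using LP_stuck[OF Kfin f0] by blast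
  have xnn: "\<And>i. i < n \<Longrightarrow> x i \<ge> 0"
  proof -
    fix i assume i: "i < n"
    then have "Inl i \<in> K" unfolding K_def by simp
    then show "x i \<ge> 0" using fx linL[OF i] unfolding feasLP_def by (force simp: bb_def)
  qed
  have xsum: "(\<Sum>i<n. x i) = 1" using fx unfolding feasLP_def by simp
  have xn: "x n > 0" using fx unfolding feasLP_def by simp
  have xrow: "\<And>j. j < length P \<Longrightarrow> bb (Inr j) \<le> lin (c (Inr j)) n x"
    using fx unfolding feasLP_def K_def by auto
  have F1: "\<And>d. (\<Sum>i<n. d i) = 0 \<Longrightarrow> (\<forall>k\<in>tightLP K c bb n x. lin (c k) n d = 0) \<Longrightarrow> \<forall>i<n. d i = 0"
  proof -
    fix d :: "nat \<Rightarrow> real" assume s0: "(\<Sum>i<n. d i) = 0" and kr: "\<forall>k\<in>tightLP K c bb n x. lin (c k) n d = 0"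
    define d' where "d' = (if d n \<ge> 0 then d else (\<lambda>l. - d l))"
    have s0': "(\<Sum>i<n. d' i) = 0" using s0 unfolding d'_def by (simp add: sum_negf)
    have lin_neg: "\<And>k. lin (c k) n (\<lambda>l. - d l) = - lin (c k) n d" unfolding lin_def by (simp add: sum_negf)
    have kr': "\<forall>k\<in>tightLP K c bb n x. lin (c k) n d' = 0" using kr lin_neg unfolding d'_def by simp
    have "d' n \<ge> 0" unfolding d'_def by simp
    then have all: "\<forall>k\<in>K. lin (c k) n d' \<ge> 0" using st s0' kr' by blast
    have nn: "\<And>i. i < n \<Longrightarrow> d' i \<ge> 0"
    proof -
      fix i assume i: "i < n"
      then have "Inl i \<in> K" unfolding K_def by simp
      then show "d' i \<ge> 0" using all linL[OF i] by force
    qed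
    have "\<forall>i\<in>{..<n}. d' i = 0" using sum_nonneg_eq_0_iff[of "{..<n}" d'] s0' nn by simp
    then show "\<forall>i<n. d i = 0" unfolding d'_def by (auto split: if_splits)
  qed
  have F2: "Fs \<noteq> {} \<Longrightarrow> \<exists>j\<in>Fs. Inr j \<in> tightLP K c bb n x"
  proof (rule ccontr)
    assume ne: "Fs \<noteq> {}" and no: "\<not> (\<exists>j\<in>Fs. Inr j \<in> tightLP K c bb n x)"
    define d where "d l = (if l = n then 1 else (0::real))" for l
    have s0: "(\<Sum>i<n. d i) = 0" unfolding d_def by simp
    have kr: "\<forall>k\<in>tightLP K c bb n x. lin (c k) n d = 0"
    proof
      fix k assume kt: "k \<in> tightLP K c bb n x"
      then have kK: "k \<in> K" unfolding tightLP_def by simp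
      then consider (L) i where "i < n" "k = Inl i" | (R) j where "j < length P" "k = Inr j"
        unfolding K_def by auto
      then show "lin (c k) n d = 0"
      proof cases
        case L then show ?thesis using linL by (simp add: d_def)
      next
        case R
        have "tr j" using no kt R Fs_def by auto
        then show ?thesis using R linT by (simp add: d_def)
      qed
    qed
    obtain j where j: "j \<in> Fs" using ne by auto
    then have "Inr j \<in> K" "\<not> tr j" unfolding K_def Fs_def by auto
    moreover have "\<forall>k\<in>K. lin (c k) n d \<ge> 0" using st s0 kr by (simp add: d_def)
    ultimately show False using linF by (force simp: d_def)
  qed

  define S where "S = {i. i < n \<and> x i > 0}"
  define U where "U = S \<union> (if Fs = {} then {} else {n})"
  have SU: "S \<subseteq> U" unfolding U_def by auto
  have Ufin: "finite U" unfolding U_def S_def by simp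
  have Ule: "U \<subseteq> {..n}" unfolding U_def S_def by auto
  define us where "us = sorted_list_of_set U"
  define m where "m = length us"
  have us: "distinct us" "set us = U" using Ufin us_def by auto
  have mU: "m = card U" using us m_def distinct_card by fastforce
  have bijU: "bij_betw ((!) us) {..<m} U" using us m_def by (intro bij_betw_nth) auto
  have sumU: "\<And>g. (\<Sum>col<m. g (us ! col)) = (\<Sum>l\<in>U. g l)"
    using sum.reindex_bij_betw[OF bijU] by simp
  have usU: "\<And>col. col < m \<Longrightarrow> us ! col \<in> U" using us m_def nth_mem by blast
  have x0out: "\<And>l. l < n \<Longrightarrow> l \<notin> U \<Longrightarrow> x l = 0"
    using xnn unfolding U_def S_def by force
  have trall: "Fs = {} \<Longrightarrow> \<forall>j<length P. tr j" unfolding Fs_def by auto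
  have cn0: "\<And>j. j < length P \<Longrightarrow> n \<notin> U \<Longrightarrow> c (Inr j) n = 0"
  proof -
    fix j assume j: "j < length P" and nU: "n \<notin> U"
    then have "Fs = {}" unfolding U_def by (auto split: if_splits)
    then have "tr j" using trall j by simp
    then show "c (Inr j) n = 0" unfolding c_def by simp
  qed
  have linU: "\<And>k z. (\<forall>l\<le>n. l \<notin> U \<longrightarrow> c k l * z l = 0) \<Longrightarrow> lin (c k) n z = (\<Sum>l\<in>U. c k l * z l)"
  proof -
    fix k z assume h: "\<forall>l\<le>n. l \<notin> U \<longrightarrow> c k l * z l = 0"
    show "lin (c k) n z = (\<Sum>l\<in>U. c k l * z l)"
      unfolding lin_def using Ule h by (intro sum.mono_neutral_left[symmetric]) auto
  qed
  have linUx: "\<And>j. j < length P \<Longrightarrow> lin (c (Inr j)) n x = (\<Sum>l\<in>U. c (Inr j) l * x l)"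
  proof -
    fix j assume j: "j < length P"
    show "lin (c (Inr j)) n x = (\<Sum>l\<in>U. c (Inr j) l * x l)"
    proof (rule linU, intro allI impI)
      fix l assume l: "l \<le> n" "l \<notin> U"
      show "c (Inr j) l * x l = 0"
      proof (cases "l < n")
        case True then show ?thesis using x0out l by simp
      next
        case False then have "l = n" using l by simp
        then show ?thesis using cn0[OF j] l by simp
      qed
    qed
  qed
  define sn where "sn j = fst (quotient_of (fst (P ! j)))" for j
  define sd where "sd j = snd (quotient_of (fst (P ! j)))" for j
  have sdpos: "\<And>j. sd j > 0" unfolding sd_def by (metis prod.collapse quotient_of_denom_pos)
  have sfrac: "\<And>j. real_of_rat (fst (P ! j)) = of_int (sn j) / of_int (sd j)"
  proof -
    fix j
    have "fst (P ! j) = of_int (sn j) / of_int (sd j)" unfolding sn_def sd_def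
      by (metis prod.collapse quotient_of_div)
    then show "real_of_rat (fst (P ! j)) = of_int (sn j) / of_int (sd j)" by (simp add: of_rat_divide)
  qed
  define Jt where "Jt = {j. j < length P \<and> Inr j \<in> tightLP K c bb n x}"
  define rowj where "rowj j = vec m (\<lambda>col. of_int (sd j) * c (Inr j) (us ! col))" for j
  define srow where "srow = vec m (\<lambda>col. if us ! col < n then 1 else (0::real))"
  define R where "R = insert srow (rowj ` Jt)"
  define yv where "yv = vec m (\<lambda>col. x (us ! col))"
  have Rfin: "finite R" unfolding R_def Jt_def by simp
  have Rc: "R \<subseteq> carrier_vec m" unfolding R_def rowj_def srow_def by auto
  have yc: "yv \<in> carrier_vec m" unfolding yv_def by simp
  have cardR: "card R \<le> 1 + length P"
  proof -
    have "card R \<le> Suc (card (rowj ` Jt))" unfolding R_def by (rule card_insert_le_m1) auto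
    also have "card (rowj ` Jt) \<le> card Jt" by (rule card_image_le) (simp add: Jt_def)
    also have "card Jt \<le> card {..<length P}" unfolding Jt_def by (intro card_mono) auto
    finally show ?thesis by simp
  qed

  have rowj_idx: "\<And>j col. col < m \<Longrightarrow> rowj j $ col = of_int (sd j) * c (Inr j) (us ! col)"
    unfolding rowj_def by simp
  have srow_idx: "\<And>col. col < m \<Longrightarrow> srow $ col = (if us ! col < n then 1 else 0)"
    unfolding srow_def by simp
  have ker: "\<And>w. w \<in> carrier_vec m \<Longrightarrow> (\<forall>r\<in>R. r \<bullet> w = 0) \<Longrightarrow> w = 0\<^sub>v m"
  proof -
    fix w :: "real vec" assume wc: "w \<in> carrier_vec m" and o: "\<forall>r\<in>R. r \<bullet> w = 0"
    define d where "d l = (\<Sum>col<m. if us ! col = l then w $ col else 0)" for l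
    have dU: "\<And>k. k < m \<Longrightarrow> d (us ! k) = w $ k"
    proof -
      fix k assume k: "k < m"
      have "d (us ! k) = (\<Sum>col<m. if col = k then w $ col else 0)"
        unfolding d_def using k us(1) m_def by (intro sum.cong) (auto simp: nth_eq_iff_index_eq)
      then show "d (us ! k) = w $ k" using k by simp
    qed
    have dout: "\<And>l. l \<notin> U \<Longrightarrow> d l = 0"
      unfolding d_def using usU by (intro sum.neutral) auto
    have sprod: "\<And>r. r \<in> carrier_vec m \<Longrightarrow> r \<bullet> w = (\<Sum>col<m. r $ col * w $ col)"
      unfolding scalar_prod_def using wc by (simp add: atLeast0LessThan)
    have dsum: "(\<Sum>i<n. d i) = 0"
    proof -
      have "(\<Sum>i<n. d i) = (\<Sum>l\<in>U. if l < n then d l else 0)"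
      proof -
        have "(\<Sum>i<n. d i) = (\<Sum>i\<in>U \<inter> {..<n}. d i)"
          using dout by (intro sum.mono_neutral_right) auto
        also have "\<dots> = (\<Sum>l\<in>U. if l < n then d l else 0)"
          using Ufin by (simp add: sum.inter_restrict)
        finally show ?thesis .
      qed
      also have "\<dots> = (\<Sum>col<m. if us ! col < n then d (us ! col) else 0)"
        using sumU[of "\<lambda>l. if l < n then d l else 0"] by simp
      also have "\<dots> = (\<Sum>col<m. srow $ col * w $ col)"
        using dU srow_idx by (intro sum.cong) auto
      also have "\<dots> = srow \<bullet> w" using sprod Rc R_def by auto
      also have "\<dots> = 0" using o R_def by simp
      finally show ?thesis .
    qed
    have dlin: "\<And>j. j < length P \<Longrightarrow> lin (c (Inr j)) n d = (\<Sum>col<m. c (Inr j) (us ! col) * w $ col)"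
    proof -
      fix j assume j: "j < length P"
      have "lin (c (Inr j)) n d = (\<Sum>l\<in>U. c (Inr j) l * d l)"
        by (rule linU) (use dout in auto)
      also have "\<dots> = (\<Sum>col<m. c (Inr j) (us ! col) * d (us ! col))"
        using sumU[of "\<lambda>l. c (Inr j) l * d l"] by simp
      also have "\<dots> = (\<Sum>col<m. c (Inr j) (us ! col) * w $ col)"
        using dU by (intro sum.cong) auto
      finally show "lin (c (Inr j)) n d = (\<Sum>col<m. c (Inr j) (us ! col) * w $ col)" .
    qed
    have dker: "\<forall>k\<in>tightLP K c bb n x. lin (c k) n d = 0"
    proof
      fix k assume kt: "k \<in> tightLP K c bb n x"
      then have kK: "k \<in> K" unfolding tightLP_def by simp
      then consider (L) i where "i < n" "k = Inl i" | (R) j where "j < length P" "k = Inr j"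
        unfolding K_def by auto
      then show "lin (c k) n d = 0"
      proof cases
        case L
        then have "x i = 0" using kt linL unfolding tightLP_def by (simp add: bb_def)
        then have "i \<notin> U" using L unfolding U_def S_def by auto
        then show ?thesis using L linL dout by simp
      next
        case R
        then have "j \<in> Jt" using kt Jt_def by simp
        then have "rowj j \<bullet> w = 0" using o R_def by simp
        moreover have "rowj j \<bullet> w = of_int (sd j) * (\<Sum>col<m. c (Inr j) (us ! col) * w $ col)"
          using sprod[of "rowj j"] rowj_idx by (simp add: rowj_def sum_distrib_left mult.assoc)
        ultimately have "(\<Sum>col<m. c (Inr j) (us ! col) * w $ col) = 0" using sdpos[of j] by simp
        then show ?thesis using dlin R by simp
      qed
    qed
    have dq: "\<forall>i<n. d i = 0" by (rule F1[OF dsum dker])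
    have dn: "n \<in> U \<Longrightarrow> d n = 0"
    proof -
      assume "n \<in> U"
      then have "Fs \<noteq> {}" unfolding U_def S_def by (auto split: if_splits)
      then obtain j where j: "j \<in> Fs" "Inr j \<in> tightLP K c bb n x" using F2 by blast
      then have "lin (c (Inr j)) n d = 0" using dker by blast
      moreover have "\<not> tr j" using j Fs_def by simp
      ultimately show "d n = 0" using linF dq by simp
    qed
    show "w = 0\<^sub>v m"
    proof (rule eq_vecI)
      show "dim_vec w = dim_vec (0\<^sub>v m)" using wc by simp
      fix col assume "col < dim_vec (0\<^sub>v m)"
      then have col: "col < m" by simp
      have "us ! col \<in> U" using usU[OF col] .
      then have "d (us ! col) = 0"
        using dq dn Ule by (cases "us ! col < n") (auto simp: le_less)
      then show "w $ col = 0\<^sub>v m $ col" using dU[OF col] col by simp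
    qed
  qed

  define L where "L = maxratsize A"
  have sdL: "\<And>j. j < length P \<Longrightarrow> real_of_int (sd j) \<le> 2 ^ L"
  proof -
    fix j assume j: "j < length P"
    have "nat (sd j) < 2 ^ bitlen (nat (sd j))" by (rule n_lt_bitlen)
    moreover have "bitlen (nat (sd j)) \<le> ratsize (fst (P ! j))"
      unfolding ratsize_def sd_def by (simp split: prod.split)
    moreover have "ratsize (fst (P ! j)) \<le> L" unfolding L_def P_def
      using ratsize_le_max j P_def nth_mem by blast
    ultimately have "nat (sd j) < 2 ^ L"
      by (meson less_le_trans one_le_numeral power_increasing)
    then have "real (nat (sd j)) < 2 ^ L" by (metis of_nat_less_numeral_power_cancel_iff)
    then show "real_of_int (sd j) \<le> 2 ^ L" using sdpos[of j] by simp
  qed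
  have cint: "\<And>j l. c (Inr j) l \<in> \<int> \<and> \<bar>c (Inr j) l\<bar> \<le> 1"
    unfolding c_def a_def by auto
  have xU: "(\<Sum>l\<in>U. if l < n then x l else 0) = 1"
  proof -
    have "(\<Sum>i<n. x i) = (\<Sum>i\<in>U \<inter> {..<n}. x i)"
      using x0out by (intro sum.mono_neutral_right) auto
    also have "\<dots> = (\<Sum>l\<in>U. if l < n then x l else 0)"
      using Ufin by (simp add: sum.inter_restrict)
    finally show ?thesis using xsum by simp
  qed
  have sprody: "\<And>r. r \<in> carrier_vec m \<Longrightarrow> r \<bullet> yv = (\<Sum>col<m. r $ col * x (us ! col))"
    unfolding scalar_prod_def yv_def by (simp add: atLeast0LessThan)
  have ry: "\<And>r. r \<in> R \<Longrightarrow> r \<bullet> yv \<in> \<int>"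
  proof -
    fix r assume rR: "r \<in> R"
    show "r \<bullet> yv \<in> \<int>"
    proof (cases "r = srow")
      case True
      have "srow \<bullet> yv = (\<Sum>col<m. srow $ col * x (us ! col))"
        using sprody[of srow] by (simp add: srow_def)
      also have "\<dots> = (\<Sum>col<m. (\<lambda>l. if l < n then x l else 0) (us ! col))"
        by (intro sum.cong) (auto simp: srow_idx)
      also have "\<dots> = (\<Sum>l\<in>U. if l < n then x l else 0)"
        by (rule sumU)
      finally show ?thesis using True xU by simp
    next
      case False
      then obtain j where j: "j \<in> Jt" "r = rowj j" using rR R_def by auto
      have jP: "j < length P" and jt: "Inr j \<in> tightLP K c bb n x" using j Jt_def by auto
      have "rowj j \<bullet> yv = of_int (sd j) * (\<Sum>col<m. c (Inr j) (us ! col) * x (us ! col))"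
        using sprody[of "rowj j"] by (simp add: rowj_def sum_distrib_left mult.assoc)
      also have "(\<Sum>col<m. c (Inr j) (us ! col) * x (us ! col)) = lin (c (Inr j)) n x"
        using sumU[of "\<lambda>l. c (Inr j) l * x l"] linUx[OF jP] by simp
      also have "lin (c (Inr j)) n x = bb (Inr j)" using jt unfolding tightLP_def by simp
      finally have eq: "rowj j \<bullet> yv = of_int (sd j) * bb (Inr j)" .
      have "of_int (sd j) * real_of_rat (fst (P ! j)) = of_int (sn j)"
        using sfrac[of j] sdpos[of j] by simp
      then have "of_int (sd j) * bb (Inr j) = of_int (sn j) \<or> of_int (sd j) * bb (Inr j) = - of_int (sn j)"
        unfolding bb_def by auto
      then show ?thesis using eq j by (auto simp del: of_int_minus simp: of_int_minus[symmetric])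
    qed
  qed
  have ent: "\<And>r i. r \<in> R \<Longrightarrow> i < m \<Longrightarrow> r $ i \<in> \<int> \<and> \<bar>r $ i\<bar> \<le> 2 ^ L"
  proof -
    fix r i assume rR: "r \<in> R" and i: "i < m"
    show "r $ i \<in> \<int> \<and> \<bar>r $ i\<bar> \<le> 2 ^ L"
    proof (cases "r = srow")
      case True
      have "(1::real) \<le> 2 ^ L" by simp
      then show ?thesis using True srow_idx[OF i] by auto
    next
      case False
      then obtain j where j: "j \<in> Jt" "r = rowj j" using rR R_def by auto
      have jP: "j < length P" using j Jt_def by auto
      have e: "r $ i = of_int (sd j) * c (Inr j) (us ! i)" using j rowj_idx[OF i] by simp
      have "r $ i \<in> \<int>" unfolding e using cint by (intro Ints_mult) auto
      moreover have "\<bar>r $ i\<bar> \<le> of_int (sd j) * 1"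
        unfolding e abs_mult using cint[of j "us ! i"] sdpos[of j]
        by (intro mult_mono) auto
      ultimately show ?thesis using order_trans[OF _ sdL[OF jP]] by auto
    qed
  qed
  obtain D :: int where D: "D > 0" "real_of_int D \<le> fact m * (2 ^ L) ^ m"
    "\<forall>k<m. yv $ k * of_int D \<in> \<int>" "m \<le> card R"
    using cramer_frac[OF Rfin Rc ker yc ry ent] by force
  have mA: "m \<le> psize A"
    using D(4) cardR patoms_len[of A] patoms_nonempty[of A] unfolding P_def by linarith
  have Sne: "S \<noteq> {}"
  proof
    assume "S = {}"
    then have "\<forall>i<n. x i = 0" using xnn unfolding S_def by force
    then show False using xsum by simp
  qed
  have m1: "1 \<le> m"
  proof -
    have "U \<noteq> {}" using Sne SU by auto
    then have "card U > 0" using Ufin by (simp add: card_gt_0_iff)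
    then show ?thesis using mU by simp
  qed

  have Sfin: "finite S" unfolding S_def by simp
  have Sn: "S \<subseteq> {..<n}" unfolding S_def by auto
  have xout: "\<And>i. i < n \<Longrightarrow> i \<notin> S \<Longrightarrow> x i = 0"
    using xnn unfolding S_def by force
  have xS: "(\<Sum>i\<in>S. x i) = 1"
  proof -
    have "(\<Sum>i\<in>S. x i) = (\<Sum>i<n. x i)"
      using Sn xout by (intro sum.mono_neutral_left) auto
    then show ?thesis using xsum by simp
  qed
  define M' where "M' = point_measure S (\<lambda>i. ennreal (x i))"
  have spM': "space M' = S" unfolding M'_def by (simp add: space_point_measure)
  have setsM': "sets M' = Pow S" unfolding M'_def by (simp add: sets_point_measure)
  have measM': "\<And>X. X \<subseteq> S \<Longrightarrow> measure M' X = (\<Sum>i\<in>X. x i)"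
    unfolding M'_def using Sfin xnn Sn by (subst measure_point_measure_finite_if) auto
  have psM': "prob_space M'"
  proof (rule prob_spaceI)
    have "emeasure M' S = (\<Sum>i\<in>S. ennreal (x i))"
      unfolding M'_def using Sfin by (rule emeasure_point_measure_finite) simp
    also have "\<dots> = ennreal (\<Sum>i\<in>S. x i)" using xnn Sn by (subst sum_ennreal) auto
    finally show "emeasure M' (space M') = 1" using xS spM' by simp
  qed
  define wf where "wf t = (SOME w. w \<in> space M \<and> rv w = t)" for t
  have wf: "\<And>i. i < n \<Longrightarrow> wf (ts ! i) \<in> space M \<and> rv (wf (ts ! i)) = ts ! i"
  proof -
    fix i assume i: "i < n"
    have "\<exists>w. w \<in> space M \<and> rv w = ts ! i" using wit[OF tsT[OF i]] by blast
    then show "wf (ts ! i) \<in> space M \<and> rv (wf (ts ! i)) = ts ! i" unfolding wf_def by (rule someI_ex)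
  qed
  define v' where "v' i = v (wf (ts ! i))" for i
  have ev': "\<And>i \<alpha>. i < n \<Longrightarrow> fbasics \<alpha> \<subseteq> Bs \<Longrightarrow> eval (v' i) \<alpha> = eval (ts ! i) \<alpha>"
  proof -
    fix i \<alpha> assume i: "i < n" and fb: "fbasics \<alpha> \<subseteq> Bs"
    have "eval (v' i) \<alpha> = eval (restr Bs (v' i)) \<alpha>" using eval_restr[OF fb] by simp
    also have "restr Bs (v' i) = ts ! i" using wf[OF i] unfolding v'_def rv_def by simp
    finally show "eval (v' i) \<alpha> = eval (ts ! i) \<alpha>" .
  qed
  have PL': "PL_model Adm M' v'"
    unfolding PL_model_def
  proof (intro conjI ballI allI)
    show "prob_space M'" by (rule psM')
  next
    fix i assume "i \<in> space M'"
    then have "i < n" using spM' Sn by auto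
    then show "v' i \<in> Adm" using wf PL unfolding PL_model_def v'_def by auto
  next
    fix \<alpha> show "ext M' v' \<alpha> \<in> sets M'" unfolding ext_def setsM' spM' by auto
  qed
  have measext: "\<And>j. j < length P \<Longrightarrow> measure M' (ext M' v' (snd (P ! j))) = (\<Sum>i<n. a j i * x i)"
  proof -
    fix j assume j: "j < length P"
    have "ext M' v' (snd (P ! j)) = {i\<in>S. eval (ts ! i) (snd (P ! j))}"
      unfolding ext_def spM' using ev' Pfb[OF j] Sn by auto
    then have "measure M' (ext M' v' (snd (P ! j))) = (\<Sum>i\<in>{i\<in>S. eval (ts ! i) (snd (P ! j))}. x i)"
      using measM' by auto
    also have "\<dots> = (\<Sum>i\<in>S. a j i * x i)"
      unfolding a_def using Sfin by (auto simp: sum.inter_filter intro!: sum.cong)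
    also have "\<dots> = (\<Sum>i<n. a j i * x i)"
      using Sn xout by (intro sum.mono_neutral_left) auto
    finally show "measure M' (ext M' v' (snd (P ! j))) = (\<Sum>i<n. a j i * x i)" .
  qed
  have pev: "peval (\<lambda>(s, \<alpha>). measure M' (ext M' v' \<alpha>) \<ge> real_of_rat s) A
      = peval (\<lambda>(s, \<alpha>). measure M (ext M v \<alpha>) \<ge> real_of_rat s) A"
  proof (rule peval_cong)
    fix pp assume "pp \<in> set (patoms A)"
    then obtain j where j: "j < length P" "P ! j = pp" unfolding P_def by (metis in_set_conv_nth)
    obtain s \<alpha> where pp: "pp = (s, \<alpha>)" by (cases pp)
    have mj: "measure M' (ext M' v' \<alpha>) = (\<Sum>i<n. a j i * x i)" using measext[OF j(1)] j pp by simp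
    have vj: "measure M (ext M v \<alpha>) = val j" unfolding val_def using j pp by simp
    have sj: "s = fst (P ! j)" using j pp by simp
    have row: "bb (Inr j) \<le> lin (c (Inr j)) n x" using xrow j by simp
    show "(\<lambda>(s, \<alpha>). measure M' (ext M' v' \<alpha>) \<ge> real_of_rat s) pp
        = (\<lambda>(s, \<alpha>). measure M (ext M v \<alpha>) \<ge> real_of_rat s) pp"
    proof (cases "tr j")
      case True
      then have "real_of_rat s \<le> (\<Sum>i<n. a j i * x i)" using row linT by (simp add: bb_def sj)
      moreover have "real_of_rat s \<le> val j" using True tr_def sj by simp
      ultimately show ?thesis using pp mj vj by simp
    next
      case False
      then have "(\<Sum>i<n. a j i * x i) \<le> real_of_rat s - x n" using row linF by (simp add: bb_def sj)
      then have "(\<Sum>i<n. a j i * x i) < real_of_rat s" using xn by simp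
      moreover have "\<not> real_of_rat s \<le> val j" using False tr_def sj by simp
      ultimately show ?thesis using pp mj vj by simp
    qed
  qed
  have psat': "psat M' v' A" using assms(3) pev psat_peval[of M' v' A] psat_peval[of M v A] by simp
  have sing: "\<forall>i\<in>space M'. \<exists>q::rat. measure M' {i} = real_of_rat q \<and> 0 \<le> q
          \<and> real (ratsize q) \<le> 2 * (real (psize A) * real (maxratsize A)
                + real (psize A) * log 2 (real (psize A)) + 1)"
  proof
    fix i assume "i \<in> space M'"
    then have iS: "i \<in> S" using spM' by simp
    then have "i \<in> U" using SU by auto
    then obtain k where k: "k < m" "us ! k = i" using us m_def by (metis in_set_conv_nth)
    have "yv $ k * of_int D \<in> \<int>" using D(3) k by simp
    moreover have "yv $ k = x i" using k yv_def by simp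
    ultimately obtain N where N: "x i * of_int D = of_int N" by (metis Ints_cases)
    have xi0: "0 \<le> x i" using iS xnn Sn by auto
    have xi1: "x i \<le> 1"
      using member_le_sum[of i S x] iS Sfin xnn Sn xS by force
    have Dr: "real_of_int D > 0" using D(1) by simp
    have N0: "0 \<le> N" using N xi0 Dr by (metis of_int_0_le_iff zero_le_mult_iff less_le)
    have "x i * of_int D \<le> 1 * of_int D" using xi1 Dr by (intro mult_right_mono) auto
    then have ND: "N \<le> D" using N by simp
    define q where "q = (of_int N / of_int D :: rat)"
    have qx: "real_of_rat q = x i" unfolding q_def using N Dr
      by (simp add: of_rat_divide field_simps)
    have mi: "measure M' {i} = x i" using measM'[of "{i}"] iS by simp
    have q0: "0 \<le> q" unfolding q_def using N0 D(1) by simp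
    have "ratsize q \<le> 2 * bitlen (nat D)" using ratsize_frac[OF D(1) N0 ND] q_def by simp
    then have "real (ratsize q) \<le> real (2 * bitlen (nat D))" by linarith
    also have "\<dots> \<le> 2 * (real (psize A) * real L + real (psize A) * log 2 (real (psize A)) + 1)"
      by (rule final_bound[OF D(1) D(2) m1 mA])
    finally show "\<exists>q::rat. measure M' {i} = real_of_rat q \<and> 0 \<le> q
          \<and> real (ratsize q) \<le> 2 * (real (psize A) * real (maxratsize A)
                + real (psize A) * log 2 (real (psize A)) + 1)"
      using qx mi q0 L_def by (intro exI[of _ q]) auto
  qed
  have uniq: "\<forall>a\<in>cpnb A. \<forall>w1\<in>space M'. \<forall>w2\<in>space M'. eval (v' w1) a \<and> eval (v' w2) a \<longrightarrow> w1 = w2"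
  proof (intro ballI impI)
    fix a w1 w2 assume a: "a \<in> cpnb A" and w1: "w1 \<in> space M'" and w2: "w2 \<in> space M'"
      and e: "eval (v' w1) a \<and> eval (v' w2) a"
    obtain f ys where a_eq: "a = conjs (map (\<lambda>B. if f B then Basic B else Neg (Basic B)) ys)"
      and ys: "distinct ys" "set ys = pbasics A"
      using a unfolding cpnb_def by blast
    have ysne: "ys \<noteq> []" using ys pbasics_nonempty[of A] by auto
    have "\<forall>B\<in>Bs. v' w1 B = f B" "\<forall>B\<in>Bs. v' w2 B = f B"
      using e eval_conjs[OF ysne] a_eq ys(2) Bs_def by auto
    then have r: "restr Bs (v' w1) = restr Bs (v' w2)" by (simp add: restr_eq)
    have i1: "w1 < n" "w2 < n" using w1 w2 spM' Sn by auto
    have "restr Bs (v' w1) = ts ! w1" "restr Bs (v' w2) = ts ! w2"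
      using wf i1 unfolding v'_def rv_def by auto
    then have "ts ! w1 = ts ! w2" using r by simp
    then show "w1 = w2" using i1 ts(1) n_def nth_eq_iff_index_eq by blast
  qed
  have cardS: "card S \<le> psize A" using card_mono[OF Ufin SU] mU mA by simp
  show ?thesis
    using PL' psat' Sfin spM' setsM' cardS sing uniq by auto
qed

end
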